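(* In every non abelian dihedral group (i.e. every $\mathbb{D}_{2n}$ with $n\in\{3,4,\dots\}\cup\{\infty\}$) the following sentences are true: \begin{itemize} \item[$(P_1)$] $\forall x \forall y\, \big( (x^2 \neq 1 \wedge y^2 \neq 1)\Rightarrow xy=yx\big)$; \item[$(P_2)$] $\forall x \forall y \forall z\, \big((x \neq 1 \wedge x^2 = 1 \wedge y^2 \neq 1 \wedge xz \neq zx )\Rightarrow x^{-1}yx=y^{-1}\big)$; \item[$(P_3)$] $\forall x \forall y \forall z \forall t \forall u\, \big((xz \neq zx \wedge yt \neq ty \wedge x^2=1 \wedge y^2=1 \wedge (xy)^2=1)\Rightarrow (xy)u=u(xy)\big)$; \item[$(P_4)$] $\forall x \forall y \forall z \forall t\, \big((x \neq 1 \wedge x^2 = 1 \wedge y \neq 1 \wedge y^2 =1 \wedge z^2 \neq 1 \wedge t^2 \neq 1 \wedge xz=zx \wedge yt=ty) \Rightarrow x=y\big)$. \end{itemize}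
   Context: For $n\in\{1,2,\dots\}\cup\{\infty\}$, $\mathbb{D}_{2n}=\langle a,b \mid a^2=b^n=1,\ a^{-1}ba=b^{-1}\rangle$ (the relation $b^n=1$ omitted when $n=\infty$); a group is dihedral if it is isomorphic to some $\mathbb{D}_{2n}$, and it is non abelian exactly when $n\ge 3$ or $n=\infty$. *)

theory Defs
  imports "HOL-Algebra.Algebra" "HOL-Library.Extended_Nat"
begin

text \<open>The pair (s, k) stands for the element b^k a^s, where s = True means
  that the factor a is present.\<close>

definition dih_red :: "enat \<Rightarrow> int \<Rightarrow> int" where
  "dih_red n k = (case n of enat m \<Rightarrow> k mod int m | \<infinity> \<Rightarrow> k)"

definition dih_carrier :: "enat \<Rightarrow> (bool \<times> int) set" where
  "dih_carrier n = {p. (case n of enat m \<Rightarrow> 0 \<le> snd p \<and> snd p < int m | \<infinity> \<Rightarrow> True)}"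

definition dih_mult :: "enat \<Rightarrow> bool \<times> int \<Rightarrow> bool \<times> int \<Rightarrow> bool \<times> int" where
  "dih_mult n p q = (fst p \<noteq> fst q, dih_red n (snd p + (if fst p then - snd q else snd q)))"

definition dihedral_group :: "enat \<Rightarrow> (bool \<times> int) monoid" where
  "dihedral_group n = \<lparr> carrier = dih_carrier n, monoid.mult = dih_mult n, monoid.one = (False, 0) \<rparr>"

end

theory Submission
  imports Defs
begin

lemma red_inf[simp]: "dih_red \<infinity> k = k" by (simp add: dih_red_def)
lemma red_fin[simp]: "dih_red (enat m) k = k mod int m" by (simp add: dih_red_def)

lemma central:
  assumes "dih_mult n (False,k) (False,k) = (False,0)"
  shows "dih_mult n (False,k) c = dih_mult n c (False,k)"
proof (cases n)
  case (enat m)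
  obtain t l where c: "c = (t,l)" by force
  from assms enat have h: "(k+k) mod int m = 0" by (simp add: dih_mult_def)
  have "(k+l) mod int m = (l - k) mod int m"
  proof -
    have "(k + l) mod int m = ((l - k) + (k+k)) mod int m" by (simp add: algebra_simps)
    also have "\<dots> = ((l-k) + (k+k) mod int m) mod int m" by (simp add: mod_add_right_eq)
    finally show ?thesis using h by simp
  qed
  then show ?thesis using enat c by (auto simp: dih_mult_def add.commute)
next
  case infinity
  then show ?thesis using assms by (cases c) (auto simp: dih_mult_def)
qed

lemma refl_sq: "dih_mult n (True,k) (True,k) = (False,0)"
  by (cases n) (auto simp: dih_mult_def)

lemma rot_sq: "dih_mult n p p \<noteq> (False,0) \<Longrightarrow> \<not> fst p"
  by (cases p) (auto simp: refl_sq)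

lemma aux_idem:
  fixes b M :: int
  assumes "0 \<le> b" "b < M" "(2*b) mod M = b" shows "b = 0"
proof (cases "2*b < M")
  case True thus ?thesis using assms by simp
next
  case False
  have "(2*b) mod M = (2*b - M) mod M" by (simp add: mod_diff_right_eq[symmetric])
  also have "\<dots> = 2*b - M" using False assms by (intro mod_pos_pos_trivial) auto
  finally show ?thesis using assms by simp
qed

lemma idem: "p \<in> dih_carrier n \<Longrightarrow> dih_mult n p p = p \<Longrightarrow> p = (False,0)"
proof -
  assume c: "p \<in> dih_carrier n" and e: "dih_mult n p p = p"
  obtain s k where p: "p = (s,k)" by force
  have s: "\<not> s" using e p by (simp add: dih_mult_def)
  show ?thesis
  proof (cases n)
    case (enat m)
    have "(k + k) mod int m = k" using e p s enat by (simp add: dih_mult_def)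
    hence "(2*k) mod int m = k" by (metis mult_2)
    moreover have "0 \<le> k" "k < int m" using c p enat by (auto simp: dih_carrier_def)
    ultimately show ?thesis using aux_idem p s by blast
  next
    case infinity
    thus ?thesis using e p s by (simp add: dih_mult_def)
  qed
qed

lemma noncentral_refl:
  assumes "dih_mult n a a = (False,0)" "dih_mult n a c \<noteq> dih_mult n c a"
  shows "fst a"
  using assms central[of n "snd a" c] by (cases a) (metis (full_types) fst_conv snd_conv)

lemma D1: "dih_mult n a a \<noteq> (False,0) \<Longrightarrow> dih_mult n b b \<noteq> (False,0) \<Longrightarrow> dih_mult n a b = dih_mult n b a"
  using rot_sq[of n a] rot_sq[of n b] by (cases a; cases b) (auto simp: dih_mult_def add.commute)

lemma D2: "dih_mult n a a = (False,0) \<Longrightarrow> dih_mult n b b \<noteq> (False,0) \<Longrightarrow> dih_mult n a c \<noteq> dih_mult n c a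
   \<Longrightarrow> dih_mult n (dih_mult n a b) (dih_mult n a b) = (False,0)"
  using rot_sq[of n b] noncentral_refl[of n a c]
  by (cases a; cases b) (auto simp: dih_mult_def refl_sq[unfolded dih_mult_def])

lemma D3: "dih_mult n a c \<noteq> dih_mult n c a \<Longrightarrow> dih_mult n b d \<noteq> dih_mult n d b \<Longrightarrow>
   dih_mult n a a = (False,0) \<Longrightarrow> dih_mult n b b = (False,0) \<Longrightarrow>
   dih_mult n (dih_mult n a b) (dih_mult n a b) = (False,0) \<Longrightarrow>
   dih_mult n (dih_mult n a b) e = dih_mult n e (dih_mult n a b)"
  using noncentral_refl[of n a c] noncentral_refl[of n b d] central[of n "snd (dih_mult n a b)" e]
  by (cases a; cases b) (auto simp: dih_mult_def)

lemma refl_comm_rot: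
  assumes "dih_mult n (True,k) c = dih_mult n c (True,k)" "\<not> fst c"
  shows "dih_mult n c c = (False,0)"
proof (cases n)
  case (enat m)
  obtain l where c: "c = (False,l)" using assms by (cases c) auto
  from assms enat c have "(k - l) mod int m = (l + k) mod int m" by (simp add: dih_mult_def)
  hence "(k - l - (l+k)) mod int m = 0" by (simp add: mod_diff_cong mod_eq_0_iff_dvd mod_eq_dvd_iff)
  hence "(-(l+l)) mod int m = 0" by (simp add: algebra_simps)
  hence "(l+l) mod int m = 0" by (metis dvd_minus_iff mod_eq_0_iff_dvd)
  then show ?thesis using enat c by (simp add: dih_mult_def)
next
  case infinity
  then show ?thesis using assms by (cases c) (auto simp: dih_mult_def)
qed

lemma inv_rot:
  assumes "a \<in> dih_carrier n" "n \<ge> 3" "a \<noteq> (False,0)" "dih_mult n a a = (False,0)"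
    "dih_mult n a c = dih_mult n c a" "dih_mult n c c \<noteq> (False,0)"
  shows "\<not> fst a \<and> (\<exists>m. n = enat m \<and> 2 * snd a = int m)"
proof -
  have nc: "\<not> fst c" using rot_sq assms(6) by blast
  have na: "\<not> fst a"
  proof
    assume "fst a"
    then obtain k where "a = (True,k)" by (cases a) auto
    thus False using refl_comm_rot[of n k c] assms nc by auto
  qed
  obtain k where a: "a = (False,k)" using na by (cases a) auto
  show ?thesis
  proof (cases n)
    case (enat m)
    with assms a have "0 \<le> k" "k < int m" "(k+k) mod int m = 0" "k \<noteq> 0"
      by (auto simp: dih_carrier_def dih_mult_def)
    then obtain q where q: "k + k = int m * q" by (metis mod_eq_0_iff_dvd dvd_def)
    have "q > 0"
    proof (rule ccontr)
      assume "\<not> q > 0"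
      hence "int m * q \<le> 0" by (simp add: mult_nonneg_nonpos)
      thus False using q \<open>0 \<le> k\<close> \<open>k \<noteq> 0\<close> by linarith
    qed
    moreover have "q < 2"
    proof (rule ccontr)
      assume "\<not> q < 2"
      hence "int m * 2 \<le> int m * q" by (intro mult_left_mono) auto
      thus False using q \<open>k < int m\<close> by linarith
    qed
    ultimately have "q = 1" by linarith
    then have "2*k = int m" using q by simp
    then show ?thesis using a enat by auto
  next
    case infinity
    then show ?thesis using assms a by (auto simp: dih_mult_def)
  qed
qed

lemma D4: "a \<in> dih_carrier n \<Longrightarrow> b \<in> dih_carrier n \<Longrightarrow> n \<ge> 3 \<Longrightarrow>
  a \<noteq> (False,0) \<Longrightarrow> dih_mult n a a = (False,0) \<Longrightarrow> b \<noteq> (False,0) \<Longrightarrow> dih_mult n b b = (False,0) \<Longrightarrow>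
  dih_mult n c c \<noteq> (False,0) \<Longrightarrow> dih_mult n d d \<noteq> (False,0) \<Longrightarrow>
  dih_mult n a c = dih_mult n c a \<Longrightarrow> dih_mult n b d = dih_mult n d b \<Longrightarrow> a = b"
  using inv_rot[of a n c] inv_rot[of b n d] by (cases a; cases b) auto


theorem lemma4p3:
  fixes G (structure) and n :: enat
  assumes "group G"
    and "n \<ge> 3"
    and "G \<cong> dihedral_group n"
  shows
    "(\<forall>x\<in>carrier G. \<forall>y\<in>carrier G.
        (x [^] (2::nat) \<noteq> \<one> \<and> y [^] (2::nat) \<noteq> \<one>) \<longrightarrow> x \<otimes> y = y \<otimes> x)
   \<and> (\<forall>x\<in>carrier G. \<forall>y\<in>carrier G. \<forall>z\<in>carrier G.
        (x \<noteq> \<one> \<and> x [^] (2::nat) = \<one> \<and> y [^] (2::nat) \<noteq> \<one> \<and> x \<otimes> z \<noteq> z \<otimes> x)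
          \<longrightarrow> inv x \<otimes> y \<otimes> x = inv y)
   \<and> (\<forall>x\<in>carrier G. \<forall>y\<in>carrier G. \<forall>z\<in>carrier G. \<forall>t\<in>carrier G. \<forall>u\<in>carrier G.
        (x \<otimes> z \<noteq> z \<otimes> x \<and> y \<otimes> t \<noteq> t \<otimes> y \<and> x [^] (2::nat) = \<one> \<and>
         y [^] (2::nat) = \<one> \<and> (x \<otimes> y) [^] (2::nat) = \<one>)
          \<longrightarrow> (x \<otimes> y) \<otimes> u = u \<otimes> (x \<otimes> y))
   \<and> (\<forall>x\<in>carrier G. \<forall>y\<in>carrier G. \<forall>z\<in>carrier G. \<forall>t\<in>carrier G.
        (x \<noteq> \<one> \<and> x [^] (2::nat) = \<one> \<and> y \<noteq> \<one> \<and> y [^] (2::nat) = \<one> \<and>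
         z [^] (2::nat) \<noteq> \<one> \<and> t [^] (2::nat) \<noteq> \<one> \<and> x \<otimes> z = z \<otimes> x \<and> y \<otimes> t = t \<otimes> y)
          \<longrightarrow> x = y)"
proof -
  interpret G: group G by fact
  let ?M = "dih_mult n"
  obtain h where h: "h \<in> hom G (dihedral_group n)" "bij_betw h (carrier G) (carrier (dihedral_group n))"
    using assms(3) unfolding is_iso_def iso_def by auto
  have hc: "\<And>x. x \<in> carrier G \<Longrightarrow> h x \<in> dih_carrier n"
    using h(1) by (auto simp: hom_def dihedral_group_def)
  have hm: "\<And>x y. x \<in> carrier G \<Longrightarrow> y \<in> carrier G \<Longrightarrow> h (x \<otimes> y) = ?M (h x) (h y)"
    using h(1) by (auto simp: hom_def dihedral_group_def)
  have inj: "\<And>x y. x \<in> carrier G \<Longrightarrow> y \<in> carrier G \<Longrightarrow> h x = h y \<longleftrightarrow> x = y"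
    using h(2) by (auto simp: bij_betw_def inj_on_def)
  have h1: "h \<one> = (False,0)"
    using idem[OF hc[OF G.one_closed]] hm[OF G.one_closed G.one_closed] by simp
  have sq: "\<And>x. x \<in> carrier G \<Longrightarrow> x [^] (2::nat) = x \<otimes> x"
    by (simp add: numeral_2_eq_2)
  have e1: "\<And>x. x \<in> carrier G \<Longrightarrow> x = \<one> \<longleftrightarrow> h x = (False,0)"
    using inj h1 by (metis G.one_closed)
  have esq: "\<And>x. x \<in> carrier G \<Longrightarrow> x [^] (2::nat) = \<one> \<longleftrightarrow> ?M (h x) (h x) = (False,0)"
    using sq e1 hm by simp
  have ec: "\<And>x y. x \<in> carrier G \<Longrightarrow> y \<in> carrier G \<Longrightarrow> x \<otimes> y = y \<otimes> x \<longleftrightarrow> ?M (h x) (h y) = ?M (h y) (h x)"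
    using inj hm by (metis G.m_closed)
  have P1: "\<forall>x\<in>carrier G. \<forall>y\<in>carrier G.
        (x [^] (2::nat) \<noteq> \<one> \<and> y [^] (2::nat) \<noteq> \<one>) \<longrightarrow> x \<otimes> y = y \<otimes> x"
    using esq ec D1 by metis
  have P2: "\<forall>x\<in>carrier G. \<forall>y\<in>carrier G. \<forall>z\<in>carrier G.
        (x \<noteq> \<one> \<and> x [^] (2::nat) = \<one> \<and> y [^] (2::nat) \<noteq> \<one> \<and> x \<otimes> z \<noteq> z \<otimes> x)
          \<longrightarrow> inv x \<otimes> y \<otimes> x = inv y"
  proof (intro ballI impI)
    fix x y z assume xyz: "x \<in> carrier G" "y \<in> carrier G" "z \<in> carrier G"
      and H: "x \<noteq> \<one> \<and> x [^] (2::nat) = \<one> \<and> y [^] (2::nat) \<noteq> \<one> \<and> x \<otimes> z \<noteq> z \<otimes> x"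
    have "(x \<otimes> y) [^] (2::nat) = \<one>"
      using D2[of n "h x" "h y" "h z"] H xyz esq ec hm by simp
    hence xy: "(x \<otimes> y) \<otimes> (x \<otimes> y) = \<one>" using sq xyz by simp
    have xx: "x \<otimes> x = \<one>" using H sq xyz by simp
    have ix: "inv x = x" using G.inv_equality[OF xx] xyz by simp
    have "inv y = x \<otimes> y \<otimes> x"
      by (rule G.inv_equality) (use xy xyz in \<open>simp_all add: G.m_assoc\<close>)
    thus "inv x \<otimes> y \<otimes> x = inv y" using ix by simp
  qed
  have P3: "\<forall>x\<in>carrier G. \<forall>y\<in>carrier G. \<forall>z\<in>carrier G. \<forall>t\<in>carrier G. \<forall>u\<in>carrier G.
        (x \<otimes> z \<noteq> z \<otimes> x \<and> y \<otimes> t \<noteq> t \<otimes> y \<and> x [^] (2::nat) = \<one> \<and>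
         y [^] (2::nat) = \<one> \<and> (x \<otimes> y) [^] (2::nat) = \<one>)
          \<longrightarrow> (x \<otimes> y) \<otimes> u = u \<otimes> (x \<otimes> y)"
  proof (intro ballI impI)
    fix x y z t u assume c: "x \<in> carrier G" "y \<in> carrier G" "z \<in> carrier G" "t \<in> carrier G" "u \<in> carrier G"
      and H: "x \<otimes> z \<noteq> z \<otimes> x \<and> y \<otimes> t \<noteq> t \<otimes> y \<and> x [^] (2::nat) = \<one> \<and>
         y [^] (2::nat) = \<one> \<and> (x \<otimes> y) [^] (2::nat) = \<one>"
    have xy: "x \<otimes> y \<in> carrier G" using c by simp
    show "(x \<otimes> y) \<otimes> u = u \<otimes> (x \<otimes> y)"
      using D3[of n "h x" "h z" "h y" "h t" "h u"] H c esq[OF xy] esq ec[OF xy c(5)] ec[OF c(1) c(3)] ec[OF c(2) c(4)] hm by simp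
  qed
  have P4: "\<forall>x\<in>carrier G. \<forall>y\<in>carrier G. \<forall>z\<in>carrier G. \<forall>t\<in>carrier G.
        (x \<noteq> \<one> \<and> x [^] (2::nat) = \<one> \<and> y \<noteq> \<one> \<and> y [^] (2::nat) = \<one> \<and>
         z [^] (2::nat) \<noteq> \<one> \<and> t [^] (2::nat) \<noteq> \<one> \<and> x \<otimes> z = z \<otimes> x \<and> y \<otimes> t = t \<otimes> y)
          \<longrightarrow> x = y"
  proof (intro ballI impI)
    fix x y z t assume c: "x \<in> carrier G" "y \<in> carrier G" "z \<in> carrier G" "t \<in> carrier G"
      and H: "x \<noteq> \<one> \<and> x [^] (2::nat) = \<one> \<and> y \<noteq> \<one> \<and> y [^] (2::nat) = \<one> \<and>
         z [^] (2::nat) \<noteq> \<one> \<and> t [^] (2::nat) \<noteq> \<one> \<and> x \<otimes> z = z \<otimes> x \<and> y \<otimes> t = t \<otimes> y"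
    have "h x = h y"
      using D4[of "h x" n "h y" "h z" "h t"] H c esq ec e1 hc assms(2) by simp
    thus "x = y" using inj c by simp
  qed
  show ?thesis using P1 P2 P3 P4 by blast
qed

end
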